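(* Let $\pi$ be an $r$-homogeneous strongly log-concave distribution with associated matroid $\mathcal{M}$, let $2\le k\le r$, let $f^{(k)}:\mathcal{M}(k)\to\mathbb{R}_{\ge0}$, and let $f^{(k-1)}=P^{\uparrow}_{k-1}f^{(k)}$, i.e. $f^{(k-1)}(J)=\sum_{I\in\mathcal{M}(k),I\supset J}\frac{w(I)}{w(J)}f^{(k)}(I)$ for $J\in\mathcal{M}(k-1)$. Then $$\mathrm{Ent}_{\pi_k}(f^{(k)})\ge\frac{k}{k-1}\,\mathrm{Ent}_{\pi_{k-1}}(f^{(k-1)}).$$
   Context: $\pi:2^{[n]}\to\mathbb{R}_{\ge0}$ has generating polynomial $g_\pi(x)=\sum_S\pi(S)\prod_{i\in S}x_i$; $r$-homogeneous means the support consists of $r$-sets; strongly log-concave means for every $J\subseteq[n]$, $\nabla^2\log(\partial_J g_\pi)$ is negative semidefinite at the all-ones vector. The support $\mathcal{B}$ is the set of bases of a rank-$r$ matroid $\mathcal{M}=(E,\mathcal{I})$; $\mathcal{M}(k)$ = independent sets of size $k$. Weights: $w(I)=(r-|I|)!\sum_{B\in\mathcal{B},B\supseteq I}\pi(B)$ for $I\in\mathcal{I}$; $\pi_k(I)=w(I)/\sum_{I'\in\mathcal{M}(k)}w(I')$ on $\mathcal{M}(k)$. $\mathrm{Ent}_\mu(f)=\mathbb{E}_\mu(f\log f)-\mathbb{E}_\mu f\log\mathbb{E}_\mu f$ with $0\log0=0$. *)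

theory Defs
  imports Complex_Main
begin

text \<open>Ground set: a finite type 'a (playing the role of [n]).
  A distribution is pi :: 'a set => real, nonnegative, summing to 1.\<close>

definition is_distribution :: "('a::finite set \<Rightarrow> real) \<Rightarrow> bool" where
  "is_distribution \<pi> \<longleftrightarrow> (\<forall>S. \<pi> S \<ge> 0) \<and> (\<Sum>S\<in>UNIV. \<pi> S) = 1"

definition homogeneous :: "nat \<Rightarrow> ('a::finite set \<Rightarrow> real) \<Rightarrow> bool" where
  "homogeneous r \<pi> \<longleftrightarrow> (\<forall>S. \<pi> S \<noteq> 0 \<longrightarrow> card S = r)"

text \<open>The generating polynomial g(x) = sum_S pi(S) prod_{i in S} x_i is multiaffine.
  Its partial derivative d_J g is sum_{S \<supseteq> J} pi(S) prod_{i in S-J} x_i.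
  Values at the all-ones vector of d_J g, its gradient and its Hessian:\<close>

definition dval :: "('a::finite set \<Rightarrow> real) \<Rightarrow> 'a set \<Rightarrow> real" where
  "dval \<pi> J = (\<Sum>S | J \<subseteq> S. \<pi> S)"

definition dgrad :: "('a::finite set \<Rightarrow> real) \<Rightarrow> 'a set \<Rightarrow> 'a \<Rightarrow> real" where
  "dgrad \<pi> J i = (if i \<in> J then 0 else dval \<pi> (insert i J))"

definition dhess :: "('a::finite set \<Rightarrow> real) \<Rightarrow> 'a set \<Rightarrow> 'a \<Rightarrow> 'a \<Rightarrow> real" where
  "dhess \<pi> J i j = (if i \<in> J \<or> j \<in> J \<or> i = j then 0 else dval \<pi> (insert i (insert j J)))"

text \<open>Hessian of log p at 1 is H/p - grad grad^T / p^2; strongly log-concave means it is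
  negative semidefinite for every J (when p(1)=0, i.e. d_J g = 0, the form is 0).\<close>

definition strongly_log_concave :: "('a::finite set \<Rightarrow> real) \<Rightarrow> bool" where
  "strongly_log_concave \<pi> \<longleftrightarrow>
     (\<forall>J v. (\<Sum>i\<in>UNIV. \<Sum>j\<in>UNIV. v i * v j *
        (dhess \<pi> J i j / dval \<pi> J - dgrad \<pi> J i * dgrad \<pi> J j / (dval \<pi> J)^2)) \<le> 0)"

definition support :: "('a set \<Rightarrow> real) \<Rightarrow> 'a set set" where
  "support \<pi> = {B. \<pi> B \<noteq> 0}"

definition matroid_bases :: "'a set set \<Rightarrow> bool" where
  "matroid_bases \<B> \<longleftrightarrow> \<B> \<noteq> {} \<and>
     (\<forall>B1\<in>\<B>. \<forall>B2\<in>\<B>. \<forall>x\<in>B1 - B2. \<exists>y\<in>B2 - B1. insert y (B1 - {x}) \<in> \<B>)"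

definition indep :: "('a set \<Rightarrow> real) \<Rightarrow> 'a set \<Rightarrow> bool" where
  "indep \<pi> I \<longleftrightarrow> (\<exists>B\<in>support \<pi>. I \<subseteq> B)"

definition Mk :: "('a set \<Rightarrow> real) \<Rightarrow> nat \<Rightarrow> 'a set set" where
  "Mk \<pi> k = {I. indep \<pi> I \<and> card I = k}"

definition wt :: "('a::finite set \<Rightarrow> real) \<Rightarrow> nat \<Rightarrow> 'a set \<Rightarrow> real" where
  "wt \<pi> r I = fact (r - card I) * (\<Sum>B | B \<in> support \<pi> \<and> I \<subseteq> B. \<pi> B)"

definition pik :: "('a::finite set \<Rightarrow> real) \<Rightarrow> nat \<Rightarrow> nat \<Rightarrow> 'a set \<Rightarrow> real" where
  "pik \<pi> r k I = wt \<pi> r I / (\<Sum>I'\<in>Mk \<pi> k. wt \<pi> r I')"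

text \<open>Entropy of f w.r.t. the measure mu on the finite set A (Isabelle: ln 0 = 0, so 0 log 0 = 0).\<close>

definition Ent :: "('b \<Rightarrow> real) \<Rightarrow> 'b set \<Rightarrow> ('b \<Rightarrow> real) \<Rightarrow> real" where
  "Ent \<mu> A f = (\<Sum>x\<in>A. \<mu> x * (f x * ln (f x)))
      - (\<Sum>x\<in>A. \<mu> x * f x) * ln (\<Sum>x\<in>A. \<mu> x * f x)"

definition up_op :: "('a::finite set \<Rightarrow> real) \<Rightarrow> nat \<Rightarrow> nat \<Rightarrow> ('a set \<Rightarrow> real) \<Rightarrow> 'a set \<Rightarrow> real" where
  "up_op \<pi> r k f J = (\<Sum>I | I \<in> Mk \<pi> k \<and> J \<subset> I. wt \<pi> r I / wt \<pi> r J * f I)"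

end

theory Submission
  imports Defs
begin
locale wsys =
  fixes w :: "'a::finite set \<Rightarrow> real" and r :: nat
  assumes w_nonneg: "\<And>I. 0 \<le> w I"
    and w_big: "\<And>I. r < card I \<Longrightarrow> w I = 0"
    and w_sum: "\<And>J. card J < r \<Longrightarrow> (\<Sum>x\<in>-J. w (insert x J)) = w J"
    and w_neg: "\<And>T y. card T + 2 \<le> r \<Longrightarrow> 0 < w T \<Longrightarrow> (\<Sum>x\<in>-T. w (insert x T) * y x) = 0 \<Longrightarrow>
        (\<Sum>x\<in>-T. \<Sum>z\<in>-insert x T. w (insert z (insert x T)) * y x * y z) \<le> 0"
begin

definition Af :: "'a set \<Rightarrow> nat \<Rightarrow> 'a set set" where
  "Af T m = {I. T \<subseteq> I \<and> card I = card T + m}"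
definition Sw :: "'a set \<Rightarrow> nat \<Rightarrow> ('a set \<Rightarrow> real) \<Rightarrow> real" where
  "Sw T m h = (\<Sum>I\<in>Af T m. w I * h I)"
definition Up :: "('a set \<Rightarrow> real) \<Rightarrow> 'a set \<Rightarrow> real" where
  "Up h J = (\<Sum>x\<in>-J. w (insert x J) / w J * h (insert x J))"
definition Ew :: "'a set \<Rightarrow> nat \<Rightarrow> ('a set \<Rightarrow> real) \<Rightarrow> real" where
  "Ew T m h = Sw T m (\<lambda>I. h I * ln (h I)) - Sw T m h * ln (Sw T m h / Sw T m (\<lambda>_. 1))"
definition Nw :: "'a set \<Rightarrow> nat \<Rightarrow> ('a set \<Rightarrow> real) \<Rightarrow> real" where
  "Nw T m h = fact m * Ew T m h"
definition nonneg_on :: "'a set \<Rightarrow> nat \<Rightarrow> ('a set \<Rightarrow> real) \<Rightarrow> bool" where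
  "nonneg_on T m h \<longleftrightarrow> (\<forall>I\<in>Af T m. 0 < w I \<longrightarrow> 0 \<le> h I)"

lemma w_mono:
  assumes "w J = 0" "x \<notin> J" shows "w (insert x J) = 0"
proof (cases "card J < r")
  case True
  have "(\<Sum>x\<in>-J. w (insert x J)) = 0" using w_sum[OF True] assms by simp
  then have "\<forall>y\<in>-J. w (insert y J) = 0"
    using sum_nonneg_eq_0_iff[of "-J" "\<lambda>y. w (insert y J)"] w_nonneg by simp
  then show ?thesis using assms by auto
next
  case False
  have "card (insert x J) = card J + 1" using assms by simp
  then show ?thesis using False w_big by simp
qed

lemma sum_pairs_Af:
  "(\<Sum>p\<in>Sigma (Af T m) (\<lambda>I. I - T). \<phi> (fst p)) = real m * (\<Sum>I\<in>Af T m. \<phi> I)"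
proof -
  have "(\<Sum>p\<in>Sigma (Af T m) (\<lambda>I. I - T). \<phi> (fst p)) = (\<Sum>I\<in>Af T m. \<Sum>x\<in>I - T. \<phi> I)"
    by (subst sum.Sigma) (auto simp: split_beta)
  also have "\<dots> = (\<Sum>I\<in>Af T m. real m * \<phi> I)"
  proof (rule sum.cong[OF refl])
    fix I assume "I \<in> Af T m"
    then have "card (I - T) = m" unfolding Af_def by (simp add: card_Diff_subset)
    then show "(\<Sum>x\<in>I - T. \<phi> I) = real m * \<phi> I" by simp
  qed
  finally show ?thesis by (simp add: sum_distrib_left)
qed

lemma P1:
  assumes "1 \<le> m"
  shows "(\<Sum>x\<in>-T. \<Sum>I\<in>Af (insert x T) (m-1). \<phi> I) = real m * (\<Sum>I\<in>Af T m. \<phi> I)"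
proof -
  have "(\<Sum>x\<in>-T. \<Sum>I\<in>Af (insert x T) (m-1). \<phi> I) = (\<Sum>p\<in>Sigma (-T) (\<lambda>x. Af (insert x T) (m-1)). \<phi> (snd p))"
    by (subst sum.Sigma) (auto simp: split_beta)
  also have "\<dots> = (\<Sum>p\<in>Sigma (Af T m) (\<lambda>I. I - T). \<phi> (fst p))"
  proof (rule sum.reindex_bij_witness[where i="\<lambda>(I,x). (x,I)" and j="\<lambda>(x,I). (I,x)"])
    fix a assume "a \<in> Sigma (- T) (\<lambda>x. Af (insert x T) (m - 1))"
    then show "(case case a of (x, I) \<Rightarrow> (I, x) of (I, x) \<Rightarrow> (x, I)) = a" by auto
  next
    fix a assume a: "a \<in> Sigma (- T) (\<lambda>x. Af (insert x T) (m - 1))"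
    then obtain x I where "a = (x,I)" "x \<notin> T" "insert x T \<subseteq> I" "card I = card (insert x T) + (m-1)"
      unfolding Af_def by auto
    then show "(case a of (x, I) \<Rightarrow> (I, x)) \<in> Sigma (Af T m) (\<lambda>I. I - T)"
      using assms unfolding Af_def by auto
  next
    fix b assume "b \<in> Sigma (Af T m) (\<lambda>I. I - T)"
    then show "(case case b of (I, x) \<Rightarrow> (x, I) of (x, I) \<Rightarrow> (I, x)) = b" by auto
  next
    fix b assume "b \<in> Sigma (Af T m) (\<lambda>I. I - T)"
    then obtain I x where b: "b = (I,x)" "T \<subseteq> I" "card I = card T + m" "x \<in> I" "x \<notin> T"
      unfolding Af_def by auto
    have "card (insert x T) = card T + 1" using b by simp
    then show "(case b of (I, x) \<Rightarrow> (x, I)) \<in> Sigma (- T) (\<lambda>x. Af (insert x T) (m - 1))"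
      using b assms unfolding Af_def by auto
  next
    fix a assume "a \<in> Sigma (- T) (\<lambda>x. Af (insert x T) (m - 1))"
    then show "\<phi> (fst (case a of (x, I) \<Rightarrow> (I, x))) = \<phi> (snd a)" by auto
  qed
  also have "\<dots> = real m * (\<Sum>I\<in>Af T m. \<phi> I)" by (rule sum_pairs_Af)
  finally show ?thesis .
qed

lemma P2:
  assumes "1 \<le> m"
  shows "(\<Sum>J\<in>Af T (m-1). \<Sum>x\<in>-J. \<phi> (insert x J)) = real m * (\<Sum>I\<in>Af T m. \<phi> I)"
proof -
  have "(\<Sum>J\<in>Af T (m-1). \<Sum>x\<in>-J. \<phi> (insert x J)) = (\<Sum>p\<in>Sigma (Af T (m-1)) (\<lambda>J. -J). \<phi> (insert (snd p) (fst p)))"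
    by (subst sum.Sigma) (auto simp: split_beta)
  also have "\<dots> = (\<Sum>p\<in>Sigma (Af T m) (\<lambda>I. I - T). \<phi> (fst p))"
  proof (rule sum.reindex_bij_witness[where i="\<lambda>(I,x). (I - {x},x)" and j="\<lambda>(J,x). (insert x J,x)"])
    fix a assume "a \<in> Sigma (Af T (m-1)) (\<lambda>J. -J)"
    then show "(case case a of (J, x) \<Rightarrow> (insert x J, x) of (I, x) \<Rightarrow> (I - {x}, x)) = a" by auto
  next
    fix a assume a: "a \<in> Sigma (Af T (m-1)) (\<lambda>J. -J)"
    then obtain J x where b: "a = (J,x)" "T \<subseteq> J" "card J = card T + (m-1)" "x \<notin> J"
      unfolding Af_def by auto
    have "card (insert x J) = card J + 1" using b by simp
    then show "(case a of (J, x) \<Rightarrow> (insert x J, x)) \<in> Sigma (Af T m) (\<lambda>I. I - T)"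
      using b assms unfolding Af_def by auto
  next
    fix b assume "b \<in> Sigma (Af T m) (\<lambda>I. I - T)"
    then show "(case case b of (I, x) \<Rightarrow> (I - {x}, x) of (J, x) \<Rightarrow> (insert x J, x)) = b" by auto
  next
    fix b assume "b \<in> Sigma (Af T m) (\<lambda>I. I - T)"
    then obtain I x where b: "b = (I,x)" "T \<subseteq> I" "card I = card T + m" "x \<in> I" "x \<notin> T"
      unfolding Af_def by auto
    have "card (I - {x}) = card I - 1" using b by simp
    then show "(case b of (I, x) \<Rightarrow> (I - {x}, x)) \<in> Sigma (Af T (m-1)) (\<lambda>J. -J)"
      using b assms unfolding Af_def by auto
  next
    fix a assume "a \<in> Sigma (Af T (m-1)) (\<lambda>J. -J)"
    then show "\<phi> (fst (case a of (J, x) \<Rightarrow> (insert x J, x))) = \<phi> (insert (snd a) (fst a))" by auto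
  qed
  also have "\<dots> = real m * (\<Sum>I\<in>Af T m. \<phi> I)" by (rule sum_pairs_Af)
  finally show ?thesis .
qed

lemma Af0: "Af T 0 = {T}"
proof
  show "Af T 0 \<subseteq> {T}"
  proof
    fix I assume "I \<in> Af T 0"
    then have "T \<subseteq> I" "card T = card I" by (auto simp: Af_def)
    then show "I \<in> {T}" using card_subset_eq[of I T] by simp
  qed
  show "{T} \<subseteq> Af T 0" by (simp add: Af_def)
qed

lemma A1_sum: "(\<Sum>I\<in>Af T 1. (\<phi>::'a set \<Rightarrow> real) I) = (\<Sum>x\<in>-T. \<phi> (insert x T))"
  using P1[where m=1 and T=T and \<phi>=\<phi>] by (simp add: Af0)

end

context wsys begin

lemma Up_mul: "w J * Up h J = (\<Sum>x\<in>-J. w (insert x J) * h (insert x J))"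
proof (cases "w J = 0")
  case True
  then have "\<forall>x\<in>-J. w (insert x J) = 0" using w_mono by auto
  then show ?thesis using True by simp
next
  case False
  show ?thesis unfolding Up_def sum_distrib_left
    by (intro sum.cong refl) (simp add: False)
qed

lemma Sw_Up: "1 \<le> m \<Longrightarrow> Sw T (m-1) (Up h) = real m * Sw T m h"
  unfolding Sw_def using P2[where m=m and T=T and \<phi>="\<lambda>I. w I * h I"] Up_mul by simp

lemma Sw0: "Sw T 0 h = w T * h T" by (simp add: Sw_def Af0)

lemma Sw_iter: "Sw T m h = w T * (Up^^m) h T / fact m"
proof (induction m arbitrary: h)
  case 0 show ?case by (simp add: Sw0)
next
  case (Suc m)
  have e1: "Sw T m (Up h) = real (Suc m) * Sw T (Suc m) h" using Sw_Up[of "Suc m" T h] by simp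
  have e2: "Sw T m (Up h) = w T * (Up^^m) (Up h) T / fact m" by (rule Suc.IH)
  have e3: "(Up^^m) (Up h) = (Up^^Suc m) h" by (simp only: funpow_Suc_right comp_def)
  have pos: "(0::real) < fact m" "(0::real) < real (Suc m)" by simp_all
  have "Sw T (Suc m) h = Sw T m (Up h) / real (Suc m)"
    using e1 pos by (simp add: field_simps del: of_nat_Suc)
  also have "\<dots> = w T * (Up^^Suc m) h T / (real (Suc m) * fact m)"
    using e2 e3 pos by (simp add: field_simps del: of_nat_Suc)
  also have "\<dots> = w T * (Up^^Suc m) h T / fact (Suc m)"
    by (simp only: fact_Suc)
  finally show ?case .
qed

lemma Sw_one: "card T + m \<le> r \<Longrightarrow> Sw T m (\<lambda>_. 1) = w T / fact m"
proof (induction m)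
  case 0 show ?case by (simp add: Sw0)
next
  case (Suc m)
  have ih: "Sw T m (\<lambda>_. 1) = w T / fact m" using Suc.IH Suc.prems by simp
  have e1: "Sw T m (Up (\<lambda>_. 1)) = real (Suc m) * Sw T (Suc m) (\<lambda>_. 1)"
    using Sw_Up[of "Suc m" T] by simp
  have e2: "Sw T m (Up (\<lambda>_. 1)) = Sw T m (\<lambda>_. 1)"
    unfolding Sw_def
  proof (rule sum.cong[OF refl])
    fix J assume "J \<in> Af T m"
    then have "card J < r" using Suc.prems unfolding Af_def by simp
    then show "w J * Up (\<lambda>_. 1) J = w J * 1" using Up_mul[of J "\<lambda>_. 1"] w_sum by simp
  qed
  have pos: "(0::real) < fact m" "(0::real) < real (Suc m)" by simp_all
  have "Sw T (Suc m) (\<lambda>_. 1) = Sw T m (\<lambda>_. 1) / real (Suc m)"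
    using e1 e2 pos by (simp add: field_simps del: of_nat_Suc)
  also have "\<dots> = w T / (real (Suc m) * fact m)"
    using ih pos by (simp add: field_simps del: of_nat_Suc)
  also have "\<dots> = w T / fact (Suc m)"
    by (simp only: fact_Suc)
  finally show ?case .
qed

lemma Up_nonneg:
  assumes "1 \<le> m" "nonneg_on T m h" "J \<in> Af T (m-1)"
  shows "0 \<le> Up h J"
  unfolding Up_def
proof (rule sum_nonneg)
  fix x assume x: "x \<in> -J"
  show "0 \<le> w (insert x J) / w J * h (insert x J)"
  proof (cases "0 < w (insert x J)")
    case True
    have "card (insert x J) = card J + 1" using x by simp
    then have "insert x J \<in> Af T m" using assms(1,3) x unfolding Af_def by auto
    then have "0 \<le> h (insert x J)" using assms(2) True unfolding nonneg_on_def by auto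
    then show ?thesis using w_nonneg by simp
  next
    case False
    then have "w (insert x J) = 0" using w_nonneg[of "insert x J"] by simp
    then show ?thesis by simp
  qed
qed

lemma nonneg_Up:
  assumes "1 \<le> m" "nonneg_on T m h" shows "nonneg_on T (m-1) (Up h)"
  using Up_nonneg[OF assms] unfolding nonneg_on_def by auto

lemma decomp:
  assumes k: "1 \<le> k" "card T + k \<le> r"
  shows "Nw T k f = (\<Sum>x\<in>-T. Nw (insert x T) (k-1) f) + Ew T 1 ((Up^^(k-1)) f)"
proof -
  define G where "G = (Up^^(k-1)) f"
  define fl where "fl = (\<lambda>I. f I * ln (f I))"
  have c1: "real k * Sw T k fl = (\<Sum>x\<in>-T. Sw (insert x T) (k-1) fl)"
    using P1[OF k(1), where T=T and \<phi>="\<lambda>I. w I * fl I"] unfolding Sw_def by simp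
  have c2: "fact (k-1) * Sw (insert x T) (k-1) fl
      = Nw (insert x T) (k-1) f + w (insert x T) * (G (insert x T) * ln (G (insert x T)))"
    if x: "x \<in> -T" for x
  proof -
    have cd: "card (insert x T) + (k-1) \<le> r" using x k by simp
    have F: "Sw (insert x T) (k-1) f = w (insert x T) * G (insert x T) / fact (k-1)"
      using Sw_iter G_def by simp
    have W: "Sw (insert x T) (k-1) (\<lambda>_. 1) = w (insert x T) / fact (k-1)"
      using Sw_one[OF cd] .
    have "fact (k-1) * (Sw (insert x T) (k-1) f * ln (Sw (insert x T) (k-1) f / Sw (insert x T) (k-1) (\<lambda>_. 1)))
        = w (insert x T) * (G (insert x T) * ln (G (insert x T)))"
    proof (cases "w (insert x T) = 0")
      case True then show ?thesis using F by simp
    next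
      case False
      have "Sw (insert x T) (k-1) f / Sw (insert x T) (k-1) (\<lambda>_. 1) = G (insert x T)"
        unfolding F W using False by (simp add: field_simps)
      then show ?thesis using F by simp
    qed
    then show ?thesis unfolding Nw_def Ew_def fl_def by (simp add: algebra_simps)
  qed
  have c3: "(\<Sum>x\<in>-T. w (insert x T) * (G (insert x T) * ln (G (insert x T))))
      = Sw T 1 (\<lambda>I. G I * ln (G I))"
    unfolding Sw_def using A1_sum[where T=T and \<phi>="\<lambda>I. w I * (G I * ln (G I))"] by simp
  have kk: "k = Suc (k-1)" using k by simp
  have c4: "Sw T k f = Sw T 1 G / fact k"
  proof -
    have "(Up^^k) f = Up G" unfolding G_def by (subst kk) simp
    then show ?thesis using Sw_iter[of T k f] Sw_iter[of T 1 G] by simp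
  qed
  have c5: "Sw T k (\<lambda>_. 1) = Sw T 1 (\<lambda>_. 1) / fact k"
    using Sw_one[OF k(2)] Sw_one[of T 1] k by simp
  have fk: "(fact k :: real) = real k * fact (k-1)" using k(1) fact_reduce[of k] by simp
  have "fact k * Sw T k fl = fact (k-1) * (real k * Sw T k fl)" using fk by simp
  also have "\<dots> = (\<Sum>x\<in>-T. fact (k-1) * Sw (insert x T) (k-1) fl)"
    using c1 by (simp add: sum_distrib_left)
  also have "\<dots> = (\<Sum>x\<in>-T. Nw (insert x T) (k-1) f + w (insert x T) * (G (insert x T) * ln (G (insert x T))))"
    using c2 by (intro sum.cong refl) auto
  also have "\<dots> = (\<Sum>x\<in>-T. Nw (insert x T) (k-1) f) + Sw T 1 (\<lambda>I. G I * ln (G I))"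
    using c3 by (simp add: sum.distrib)
  finally have d1: "fact k * Sw T k fl = (\<Sum>x\<in>-T. Nw (insert x T) (k-1) f) + Sw T 1 (\<lambda>I. G I * ln (G I))" .
  have d2: "fact k * (Sw T k f * ln (Sw T k f / Sw T k (\<lambda>_. 1)))
      = Sw T 1 G * ln (Sw T 1 G / Sw T 1 (\<lambda>_. 1))"
    using c4 c5 by simp
  have "Nw T k f = fact k * Sw T k fl - fact k * (Sw T k f * ln (Sw T k f / Sw T k (\<lambda>_. 1)))"
    unfolding Nw_def Ew_def fl_def by (simp add: algebra_simps)
  also have "\<dots> = (\<Sum>x\<in>-T. Nw (insert x T) (k-1) f) + Ew T 1 G"
    using d1 d2 unfolding Ew_def by simp
  finally show ?thesis unfolding G_def .
qed

end

context wsys begin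

lemma pair_swap:
  "(\<Sum>x\<in>-T. \<Sum>y\<in>-insert x T. (\<phi>::'a\<Rightarrow>'a\<Rightarrow>real) x y) = (\<Sum>x\<in>-T. \<Sum>y\<in>-insert x T. \<phi> y x)"
proof -
  have "(\<Sum>x\<in>-T. \<Sum>y\<in>-insert x T. \<phi> x y) = (\<Sum>p\<in>Sigma (-T) (\<lambda>x. -insert x T). \<phi> (fst p) (snd p))"
    by (subst sum.Sigma) (auto simp: split_beta)
  also have "\<dots> = (\<Sum>p\<in>Sigma (-T) (\<lambda>x. -insert x T). \<phi> (snd p) (fst p))"
    by (rule sum.reindex_bij_witness[where i=prod.swap and j=prod.swap]) auto
  also have "\<dots> = (\<Sum>x\<in>-T. \<Sum>y\<in>-insert x T. \<phi> y x)"
    by (subst sum.Sigma) (auto simp: split_beta)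
  finally show ?thesis .
qed

lemma quad:
  assumes T: "card T + 2 \<le> r" "0 < w T"
  shows "(\<Sum>x\<in>-T. \<Sum>y\<in>-insert x T. w (insert y (insert x T)) * z x * z y)
      \<le> (\<Sum>x\<in>-T. w (insert x T) * z x)^2 / w T"
proof -
  define a where "a x = w (insert x T)" for x
  define b where "b x y = w (insert y (insert x T))" for x y
  define s where "s = (\<Sum>x\<in>-T. a x * z x) / w T"
  define v where "v x = z x - s" for x
  have suma: "(\<Sum>x\<in>-T. a x) = w T" unfolding a_def using w_sum T by simp
  have sumb: "(\<Sum>y\<in>-insert x T. b x y) = a x" if "x \<in> -T" for x
  proof -
    have "card (insert x T) < r" using that T by simp
    then show ?thesis unfolding a_def b_def using w_sum[of "insert x T"] by simp
  qed
  have av: "(\<Sum>x\<in>-T. a x * v x) = 0"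
  proof -
    have "(\<Sum>x\<in>-T. a x * v x) = (\<Sum>x\<in>-T. a x * z x) - (\<Sum>x\<in>-T. a x) * s"
      unfolding v_def by (simp add: right_diff_distrib sum_subtractf sum_distrib_right)
    also have "\<dots> = 0" unfolding suma s_def using T by simp
    finally show ?thesis .
  qed
  have neg: "(\<Sum>x\<in>-T. \<Sum>y\<in>-insert x T. b x y * v x * v y) \<le> 0"
    using w_neg[OF T, of v] av unfolding a_def b_def by simp
  have S1: "(\<Sum>x\<in>-T. \<Sum>y\<in>-insert x T. b x y * v x) = 0"
  proof -
    have "(\<Sum>x\<in>-T. \<Sum>y\<in>-insert x T. b x y * v x) = (\<Sum>x\<in>-T. a x * v x)"
    proof (intro sum.cong refl)
      fix x assume "x \<in> -T"
      then show "(\<Sum>y\<in>-insert x T. b x y * v x) = a x * v x"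
        using sumb by (simp add: sum_distrib_right[symmetric])
    qed
    then show ?thesis using av by simp
  qed
  have bsym: "b y x = b x y" for x y unfolding b_def by (simp add: insert_commute)
  have S2: "(\<Sum>x\<in>-T. \<Sum>y\<in>-insert x T. b x y * v y) = 0"
    using pair_swap[where T=T and \<phi>="\<lambda>x y. b x y * v y"] S1 bsym by simp
  have S3: "(\<Sum>x\<in>-T. \<Sum>y\<in>-insert x T. b x y) = w T"
    using sumb suma by simp
  have "(\<Sum>x\<in>-T. \<Sum>y\<in>-insert x T. w (insert y (insert x T)) * z x * z y)
     = (\<Sum>x\<in>-T. \<Sum>y\<in>-insert x T. b x y * v x * v y + s * (b x y * v x) + s * (b x y * v y) + s^2 * b x y)"
    unfolding b_def v_def by (intro sum.cong refl) (simp add: algebra_simps power2_eq_square)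
  also have "\<dots> = (\<Sum>x\<in>-T. \<Sum>y\<in>-insert x T. b x y * v x * v y)
      + s * (\<Sum>x\<in>-T. \<Sum>y\<in>-insert x T. b x y * v x)
      + s * (\<Sum>x\<in>-T. \<Sum>y\<in>-insert x T. b x y * v y)
      + s^2 * (\<Sum>x\<in>-T. \<Sum>y\<in>-insert x T. b x y)"
    by (simp add: sum.distrib sum_distrib_left)
  also have "\<dots> = (\<Sum>x\<in>-T. \<Sum>y\<in>-insert x T. b x y * v x * v y) + s^2 * w T"
    using S1 S2 S3 by simp
  also have "\<dots> \<le> s^2 * w T" using neg by simp
  also have "\<dots> = (\<Sum>x\<in>-T. a x * z x)^2 / w T"
    unfolding s_def using T by (simp add: power2_eq_square field_simps)
  finally show ?thesis unfolding a_def .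
qed

end

context wsys begin

lemma base:
  assumes T: "card T + 2 \<le> r" and nn: "nonneg_on T 2 f"
  shows "Ew T 1 (Up f) \<le> Ew T 2 f"
proof -
  define g where "g = Up f"
  define a where "a x = w (insert x T)" for x
  define b where "b x y = w (insert y (insert x T))" for x y
  define fp where "fp x y = f (insert y (insert x T))" for x y
  define gg where "gg x = g (insert x T)" for x
  have s2: "2 * Sw T 2 \<phi> = (\<Sum>x\<in>-T. \<Sum>y\<in>-insert x T. b x y * \<phi> (insert y (insert x T)))" for \<phi>
  proof -
    have "(\<Sum>x\<in>-T. \<Sum>I\<in>Af (insert x T) 1. w I * \<phi> I) = real 2 * Sw T 2 \<phi>"
      using P1[where m=2 and T=T and \<phi>="\<lambda>I. w I * \<phi> I"] unfolding Sw_def by simp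
    moreover have "(\<Sum>I\<in>Af (insert x T) 1. w I * \<phi> I) = (\<Sum>y\<in>-insert x T. b x y * \<phi> (insert y (insert x T)))" for x
      using A1_sum[where T="insert x T" and \<phi>="\<lambda>I. w I * \<phi> I"] unfolding b_def by simp
    ultimately show ?thesis by simp
  qed
  have s1: "Sw T 1 \<phi> = (\<Sum>x\<in>-T. a x * \<phi> (insert x T))" for \<phi>
    using A1_sum[where T=T and \<phi>="\<lambda>I. w I * \<phi> I"] unfolding Sw_def a_def by simp
  have ag: "a x * gg x = (\<Sum>y\<in>-insert x T. b x y * fp x y)" for x
    unfolding a_def gg_def g_def b_def fp_def by (rule Up_mul)
  have M2: "Sw T 1 g = 2 * Sw T 2 f" using Sw_Up[of 2 T f] unfolding g_def by simp
  have W1: "Sw T 1 (\<lambda>_. 1) = w T" using Sw_one[of T 1] T by simp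
  have W2: "Sw T 2 (\<lambda>_. 1) = w T / 2" using Sw_one[of T 2] T by simp
  have bsym: "b y x = b x y" for x y unfolding b_def by (simp add: insert_commute)
  have fsym: "fp y x = fp x y" for x y unfolding fp_def by (simp add: insert_commute)
  have bnn: "0 \<le> b x y" for x y unfolding b_def by (rule w_nonneg)
  have ann: "0 \<le> a x" for x unfolding a_def by (rule w_nonneg)
  have fnn: "0 \<le> fp x y" if "x \<in> -T" "y \<in> -insert x T" "0 < b x y" for x y
  proof -
    have "card (insert y (insert x T)) = card T + 2" using that by simp
    then have "insert y (insert x T) \<in> Af T 2" unfolding Af_def by auto
    then show ?thesis using nn that unfolding nonneg_on_def b_def fp_def by auto
  qed
  have bfnn: "0 \<le> b x y * fp x y" if "x \<in> -T" "y \<in> -insert x T" for x y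
  proof (cases "b x y = 0")
    case False
    then have "0 < b x y" using bnn[of x y] by simp
    then show ?thesis using fnn[OF that] by simp
  qed simp
  have gnn: "0 \<le> gg x" if "x \<in> -T" for x
  proof -
    have "card (insert x T) = card T + 1" using that by simp
    then have "insert x T \<in> Af T 1" unfolding Af_def by auto
    then show ?thesis using Up_nonneg[of 2 T f "insert x T"] nn unfolding gg_def g_def by simp
  qed
  define M where "M = Sw T 1 g"
  have M_sum: "M = (\<Sum>x\<in>-T. \<Sum>y\<in>-insert x T. b x y * fp x y)"
    using M2 s2[of f] unfolding M_def fp_def by simp
  have M_a: "M = (\<Sum>x\<in>-T. a x * gg x)" using s1[of g] unfolding M_def gg_def by simp
  have F2: "Sw T 2 f = M / 2" using M2 unfolding M_def by simp
  have E1: "Ew T 1 g = Sw T 1 (\<lambda>I. g I * ln (g I)) - M * ln (M / w T)"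
    unfolding Ew_def M_def W1 by simp
  have E2: "Ew T 2 f = Sw T 2 (\<lambda>I. f I * ln (f I)) - (M/2) * ln (M / w T)"
  proof -
    have "M / 2 / (w T / 2) = M / w T" by simp
    then show ?thesis unfolding Ew_def W2 F2 by simp
  qed
  have X2: "2 * Sw T 2 (\<lambda>I. f I * ln (f I)) = (\<Sum>x\<in>-T. \<Sum>y\<in>-insert x T. b x y * (fp x y * ln (fp x y)))"
    using s2 unfolding fp_def by simp
  have Y: "Sw T 1 (\<lambda>I. g I * ln (g I)) = (\<Sum>x\<in>-T. \<Sum>y\<in>-insert x T. b x y * fp x y * ln (gg x))"
  proof -
    have "Sw T 1 (\<lambda>I. g I * ln (g I)) = (\<Sum>x\<in>-T. (a x * gg x) * ln (gg x))"
      using s1 unfolding gg_def by (simp add: mult.assoc)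
    also have "\<dots> = (\<Sum>x\<in>-T. \<Sum>y\<in>-insert x T. b x y * fp x y * ln (gg x))"
      unfolding ag by (simp add: sum_distrib_right)
    finally show ?thesis .
  qed
  have Ysw: "(\<Sum>x\<in>-T. \<Sum>y\<in>-insert x T. b x y * fp x y * ln (gg x))
      = (\<Sum>x\<in>-T. \<Sum>y\<in>-insert x T. b x y * fp x y * ln (gg y))"
    using pair_swap[where T=T and \<phi>="\<lambda>x y. b x y * fp x y * ln (gg x)"] bsym fsym by simp
  show ?thesis
  proof (cases "M = 0")
    case True
    have inner0: "(\<Sum>y\<in>-insert x T. b x y * fp x y) = 0" if "x \<in> -T" for x
    proof -
      have nn': "\<forall>x\<in>-T. 0 \<le> (\<Sum>y\<in>-insert x T. b x y * fp x y)"
        using bfnn by (auto intro!: sum_nonneg)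
      have "\<forall>x\<in>-T. (\<Sum>y\<in>-insert x T. b x y * fp x y) = 0"
        using M_sum True sum_nonneg_eq_0_iff[of "-T" "\<lambda>x. \<Sum>y\<in>-insert x T. b x y * fp x y"]
          nn' by simp
      then show ?thesis using that by blast
    qed
    have allz: "b x y * fp x y = 0" if "x \<in> -T" "y \<in> -insert x T" for x y
      using inner0[OF that(1)] sum_nonneg_eq_0_iff[of "-insert x T" "\<lambda>y. b x y * fp x y"]
        bfnn[OF that(1)] that(2) by simp
    have "Sw T 2 (\<lambda>I. f I * ln (f I)) = 0"
    proof -
      have "(\<Sum>x\<in>-T. \<Sum>y\<in>-insert x T. b x y * (fp x y * ln (fp x y))) = 0"
        using allz by (intro sum.neutral ballI) (simp add: mult.assoc[symmetric])
      then show ?thesis using X2 by simp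
    qed
    moreover have "Sw T 1 (\<lambda>I. g I * ln (g I)) = 0"
      unfolding Y using allz by (intro sum.neutral ballI) simp
    ultimately show ?thesis using E1 E2 True unfolding g_def by simp
  next
    case False
    have Mnn: "0 \<le> M" unfolding M_sum using bfnn by (auto intro!: sum_nonneg)
    then have Mpos: "0 < M" using False by simp
    have wTpos: "0 < w T"
    proof (rule ccontr)
      assume "\<not> 0 < w T"
      then have "w T = 0" using w_nonneg[of T] by simp
      then have "\<forall>x\<in>-T. a x = 0" unfolding a_def using w_mono by auto
      then have "M = 0" unfolding M_a by simp
      then show False using False by simp
    qed
    define L where "L = ln (M / w T)"
    have termw: "b x y * fp x y * ln (gg x) + b x y * fp x y * ln (gg y)
        \<le> b x y * (fp x y * ln (fp x y)) + L * (b x y * fp x y)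
           + (w T / M) * (b x y * gg x * gg y) - b x y * fp x y"
      if xy: "x \<in> -T" "y \<in> -insert x T" for x y
    proof -
      define t where "t = b x y * fp x y"
      have tnn: "0 \<le> t" unfolding t_def using bfnn[OF xy] .
      have yT: "y \<in> -T" using xy by auto
      have q0: "0 \<le> (w T / M) * (b x y * gg x * gg y)"
        using wTpos Mpos bnn[of x y] gnn[OF xy(1)] gnn[OF yT] by simp
      show ?thesis
      proof (cases "t = 0")
        case True
        then have "b x y * fp x y = 0" unfolding t_def .
        then have z1: "b x y * fp x y * ln (gg x) = 0" and z2: "b x y * fp x y * ln (gg y) = 0"
          and z3: "b x y * (fp x y * ln (fp x y)) = 0" and z4: "b x y * fp x y = 0"
          by (simp_all add: mult.assoc[symmetric])
        have "b x y * fp x y * ln (gg x) + b x y * fp x y * ln (gg y) = 0"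
          using z1 z2 by linarith
        moreover have "b x y * (fp x y * ln (fp x y)) + L * (b x y * fp x y)
           + (w T / M) * (b x y * gg x * gg y) - b x y * fp x y = (w T / M) * (b x y * gg x * gg y)"
        proof -
          have "L * (b x y * fp x y) = 0" using z4 by simp
          then show ?thesis using z3 z4 by linarith
        qed
        ultimately show ?thesis using q0 by linarith
      next
        case False
        then have tpos: "0 < t" using tnn by simp
        have bpos: "0 < b x y" using tpos bnn[of x y] unfolding t_def
          by (metis less_eq_real_def mult_zero_left)
        have fpos: "0 < fp x y" using tpos fnn[OF xy bpos] unfolding t_def
          by (metis less_eq_real_def mult_zero_right)
        have gxpos: "0 < gg x"
        proof -
          have "t \<le> (\<Sum>y'\<in>-insert x T. b x y' * fp x y')"
            unfolding t_def using xy bfnn[OF xy(1)] by (intro member_le_sum) auto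
          then have "0 < a x * gg x" using ag tpos by simp
          then show ?thesis using gnn[OF xy(1)] ann[of x]
            by (metis less_eq_real_def mult_zero_right not_less_iff_gr_or_eq)
        qed
        have gypos: "0 < gg y"
        proof -
          have xy2: "x \<in> -insert y T" using xy by auto
          have "b y x * fp y x \<le> (\<Sum>y'\<in>-insert y T. b y y' * fp y y')"
            using xy2 bfnn[OF yT] by (intro member_le_sum) auto
          then have "t \<le> (\<Sum>y'\<in>-insert y T. b y y' * fp y y')"
            unfolding t_def using bsym fsym by simp
          then have "0 < a y * gg y" using ag tpos by simp
          then show ?thesis using gnn[OF yT] ann[of y]
            by (metis less_eq_real_def mult_zero_right not_less_iff_gr_or_eq)
        qed
        define u where "u = (gg x * gg y * w T) / (M * fp x y)"
        have upos: "0 < u" unfolding u_def using gxpos gypos wTpos Mpos fpos by simp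
        have lnu: "ln u = ln (gg x) + ln (gg y) + ln (w T) - ln M - ln (fp x y)"
        proof -
          have "ln u = ln (gg x * gg y * w T) - ln (M * fp x y)"
            unfolding u_def using gxpos gypos wTpos Mpos fpos by (simp add: ln_div)
          also have "\<dots> = ln (gg x) + ln (gg y) + ln (w T) - (ln M + ln (fp x y))"
            using gxpos gypos wTpos Mpos fpos by (simp add: ln_mult)
          finally show ?thesis by simp
        qed
        have Leq: "L = ln M - ln (w T)" unfolding L_def using Mpos wTpos by (simp add: ln_div)
        have e: "ln (gg x) + ln (gg y) = ln u + ln (fp x y) + L" using lnu Leq by simp
        have tu: "t * u = (w T / M) * (b x y * gg x * gg y)"
          unfolding u_def t_def using fpos Mpos by (simp add: field_simps)
        have lnle: "t * ln u \<le> t * (u - 1)"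
          using ln_le_minus_one[OF upos] tnn by (simp add: mult_left_mono)
        have "b x y * fp x y * ln (gg x) + b x y * fp x y * ln (gg y) = t * (ln (gg x) + ln (gg y))"
          unfolding t_def by (simp add: algebra_simps)
        also have "\<dots> = t * ln u + t * ln (fp x y) + t * L" unfolding e by (simp add: algebra_simps)
        also have "\<dots> \<le> t * (u - 1) + t * ln (fp x y) + t * L" using lnle by simp
        also have "\<dots> = b x y * (fp x y * ln (fp x y)) + L * (b x y * fp x y)
           + (w T / M) * (b x y * gg x * gg y) - b x y * fp x y"
          using tu unfolding t_def by (simp add: algebra_simps)
        finally show ?thesis .
      qed
    qed
    define Q where "Q = (\<Sum>x\<in>-T. \<Sum>y\<in>-insert x T. b x y * gg x * gg y)"
    have Qle: "Q \<le> M^2 / w T"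
      using quad[OF T wTpos, of gg] unfolding Q_def M_a a_def b_def .
    have QM: "(w T / M) * Q \<le> M"
    proof -
      have "(w T / M) * Q \<le> (w T / M) * (M^2 / w T)"
        using Qle wTpos Mpos by (intro mult_left_mono) auto
      also have "\<dots> = M" using wTpos Mpos by (simp add: power2_eq_square field_simps)
      finally show ?thesis .
    qed
    have "(\<Sum>x\<in>-T. \<Sum>y\<in>-insert x T. b x y * fp x y * ln (gg x) + b x y * fp x y * ln (gg y))
       \<le> (\<Sum>x\<in>-T. \<Sum>y\<in>-insert x T. b x y * (fp x y * ln (fp x y)) + L * (b x y * fp x y)
           + (w T / M) * (b x y * gg x * gg y) - b x y * fp x y)"
      using termw by (intro sum_mono) auto
    also have "\<dots> = (\<Sum>x\<in>-T. \<Sum>y\<in>-insert x T. b x y * (fp x y * ln (fp x y)))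
        + L * (\<Sum>x\<in>-T. \<Sum>y\<in>-insert x T. b x y * fp x y)
        + (w T / M) * Q - (\<Sum>x\<in>-T. \<Sum>y\<in>-insert x T. b x y * fp x y)"
      unfolding Q_def by (simp add: sum.distrib sum_subtractf sum_distrib_left)
    finally have main: "2 * Sw T 1 (\<lambda>I. g I * ln (g I))
        \<le> 2 * Sw T 2 (\<lambda>I. f I * ln (f I)) + L * M + (w T / M) * Q - M"
      unfolding X2 Y M_sum[symmetric] using Ysw by (simp add: sum.distrib)
    have LM: "L * M = M * L" by simp
    show ?thesis using main QM E1 E2 LM unfolding g_def L_def by linarith
  qed
qed

end

context wsys begin

lemma nonneg_sub:
  assumes "x \<notin> T" "nonneg_on T k f" "1 \<le> k"
  shows "nonneg_on (insert x T) (k-1) f"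
  unfolding nonneg_on_def
proof (intro ballI impI)
  fix I assume I: "I \<in> Af (insert x T) (k-1)" "0 < w I"
  have "card (insert x T) = card T + 1" using assms(1) by simp
  then have "I \<in> Af T k" using I(1) assms(3) unfolding Af_def by auto
  then show "0 \<le> f I" using assms(2) I(2) unfolding nonneg_on_def by auto
qed

lemma tele:
  assumes C: "\<And>j T h. 2 \<le> j \<Longrightarrow> j \<le> m \<Longrightarrow> card T + j \<le> r \<Longrightarrow> nonneg_on T j h \<Longrightarrow>
      real j * Nw T (j-1) (Up h) \<le> (real j - 1) * Nw T j h"
  shows "1 \<le> m \<Longrightarrow> card T + m \<le> r \<Longrightarrow> nonneg_on T m h \<Longrightarrow>
      real m * Nw T 1 ((Up^^(m-1)) h) \<le> Nw T m h"
  using C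
proof (induction m arbitrary: h)
  case 0 then show ?case by simp
next
  case (Suc n)
  show ?case
  proof (cases "n = 0")
    case True then show ?thesis by simp
  next
    case False
    then have n1: "1 \<le> n" by simp
    have nnU: "nonneg_on T n (Up h)" using nonneg_Up[of "Suc n" T h] Suc.prems by simp
    have Cn': "\<And>j T h. 2 \<le> j \<Longrightarrow> j \<le> n \<Longrightarrow> card T + j \<le> r \<Longrightarrow> nonneg_on T j h \<Longrightarrow>
      real j * Nw T (j-1) (Up h) \<le> (real j - 1) * Nw T j h"
    proof -
      fix j T' h' assume a: "2 \<le> j" "j \<le> n" "card T' + j \<le> r" "nonneg_on T' j h'"
      have "j \<le> Suc n" using a(2) by simp
      then show "real j * Nw T' (j-1) (Up h') \<le> (real j - 1) * Nw T' j h'"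
        by (rule Suc.prems(4)[OF a(1) _ a(3) a(4)])
    qed
    have cn: "card T + n \<le> r" using Suc.prems(2) by simp
    have IH: "real n * Nw T 1 ((Up^^(n-1)) (Up h)) \<le> Nw T n (Up h)"
      by (rule Suc.IH[OF n1 cn nnU Cn'])
    have fp: "(Up^^(n-1)) (Up h) = (Up^^n) h"
    proof -
      have "n = Suc (n-1)" using n1 by simp
      then have "(Up^^n) h = (Up^^(n-1)) (Up h)" by (metis comp_apply funpow_Suc_right)
      then show ?thesis by simp
    qed
    have Cn: "real (Suc n) * Nw T n (Up h) \<le> real n * Nw T (Suc n) h"
    proof -
      have "real (Suc n) * Nw T (Suc n - 1) (Up h) \<le> (real (Suc n) - 1) * Nw T (Suc n) h"
        using n1 by (intro Suc.prems(4)[OF _ _ Suc.prems(2) Suc.prems(3)]) auto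
      then show ?thesis by simp
    qed
    define X where "X = Nw T 1 ((Up^^n) h)"
    have "real (Suc n) * (real n * X) \<le> real (Suc n) * Nw T n (Up h)"
      using IH fp unfolding X_def by (intro mult_left_mono) auto
    then have "real n * (real (Suc n) * X) \<le> real n * Nw T (Suc n) h"
      using Cn by (simp add: algebra_simps)
    then have "real (Suc n) * X \<le> Nw T (Suc n) h"
      using n1 by (simp add: mult_le_cancel_left_pos)
    then show ?thesis unfolding X_def by simp
  qed
qed

lemma mainC:
  "2 \<le> k \<Longrightarrow> card T + k \<le> r \<Longrightarrow> nonneg_on T k f \<Longrightarrow>
    real k * Nw T (k-1) (Up f) \<le> (real k - 1) * Nw T k f"
proof (induction k arbitrary: T f rule: less_induct)
  case (less k)
  show ?case
  proof (cases "k = 2")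
    case True
    have "Ew T 1 (Up f) \<le> Ew T 2 f" using base less.prems True by simp
    then show ?thesis using True by (simp add: Nw_def)
  next
    case False
    then have k3: "3 \<le> k" using less.prems by simp
    define G where "G = (Up^^(k-1)) f"
    define e where "e = Ew T 1 G"
    define a where "a = (\<Sum>x\<in>-T. Nw (insert x T) (k-1) f)"
    define b where "b = (\<Sum>x\<in>-T. Nw (insert x T) (k-2) (Up f))"
    have d1: "Nw T k f = a + e" unfolding a_def e_def G_def
      using decomp[of k T f] less.prems by simp
    have fp: "(Up^^(k-2)) (Up f) = G"
    proof -
      have "k - 1 = Suc (k-2)" using k3 by simp
      then have "(Up^^(k-1)) f = (Up^^(k-2)) (Up f)" by (metis comp_apply funpow_Suc_right)
      then show ?thesis unfolding G_def by simp
    qed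
    have d2: "Nw T (k-1) (Up f) = b + e"
    proof -
      have "Nw T (k-1) (Up f) = (\<Sum>x\<in>-T. Nw (insert x T) (k-1-1) (Up f)) + Ew T 1 ((Up^^(k-1-1)) (Up f))"
        using decomp[of "k-1" T "Up f"] less.prems k3 by simp
      moreover have "k - 1 - 1 = k - 2" by simp
      ultimately show ?thesis unfolding b_def e_def using fp by simp
    qed
    have IHx: "real (k-1) * Nw (insert x T) (k-2) (Up f) \<le> (real (k-1) - 1) * Nw (insert x T) (k-1) f"
      if x: "x \<in> -T" for x
    proof -
      have "nonneg_on (insert x T) (k-1) f" using nonneg_sub[of x T k f] x less.prems k3 by simp
      moreover have "card (insert x T) + (k-1) \<le> r" using x less.prems k3 by simp
      ultimately have "real (k-1) * Nw (insert x T) (k-1-1) (Up f) \<le> (real (k-1) - 1) * Nw (insert x T) (k-1) f"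
        using less.IH[of "k-1" "insert x T" f] k3 by simp
      moreover have "k - 1 - 1 = k - 2" by simp
      ultimately show ?thesis by simp
    qed
    have sb: "real (k-1) * b \<le> (real (k-1) - 1) * a"
      unfolding a_def b_def sum_distrib_left using IHx by (intro sum_mono) auto
    have tl: "real (k-1) * e \<le> b + e"
    proof -
      have C: "\<And>j T h. 2 \<le> j \<Longrightarrow> j \<le> k-1 \<Longrightarrow> card T + j \<le> r \<Longrightarrow> nonneg_on T j h \<Longrightarrow>
          real j * Nw T (j-1) (Up h) \<le> (real j - 1) * Nw T j h"
        using less.IH by simp
      have nnU: "nonneg_on T (k-1) (Up f)" using nonneg_Up[of k T f] less.prems k3 by simp
      have "real (k-1) * Nw T 1 ((Up^^(k-1-1)) (Up f)) \<le> Nw T (k-1) (Up f)"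
        using tele[where m="k-1" and T=T and h="Up f", OF C] nnU less.prems k3 by simp
      moreover have "k - 1 - 1 = k - 2" by simp
      moreover have "Nw T 1 G = e" unfolding e_def Nw_def by simp
      ultimately show ?thesis using d2 fp by simp
    qed
    define K where "K = real k"
    have K3: "3 \<le> K" unfolding K_def using k3 by simp
    have rk1: "real (k-1) = K - 1" unfolding K_def using k3 by simp
    have sb0: "(K-1) * b \<le> (K-1-1) * a" using sb unfolding rk1 .
    have "K - 1 - 1 = K - 2" by simp
    then have sb': "(K-1) * b \<le> (K-2) * a" using sb0 by simp
    have tl0: "(K-1) * e \<le> b + e" using tl unfolding rk1 .
    have "(K-2) * e = (K-1) * e - e" by (simp add: algebra_simps)
    then have tl': "(K-2) * e \<le> b" using tl0 by linarith
    have h1: "(K-1) * ((K-1) * b) \<le> (K-1) * ((K-2) * a)"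
      using sb' K3 by (intro mult_left_mono) auto
    have eq: "(K-2) * ((K-1) * (a+e) - K * (b+e)) = ((K-1) * ((K-2) * a) - (K-1) * ((K-1) * b)) + (b - (K-2) * e)"
      by (simp add: algebra_simps)
    have "0 \<le> (K-2) * ((K-1) * (a+e) - K * (b+e))" unfolding eq using h1 tl' by simp
    then have "0 \<le> (K-1) * (a+e) - K * (b+e)" using K3 by (simp add: zero_le_mult_iff)
    then show ?thesis unfolding d1 d2 K_def by simp
  qed
qed

end

lemma sum_restr_UNIV:
  fixes h :: "'a::finite \<Rightarrow> real"
  assumes "\<forall>j\<in>S. h j = 0"
  shows "(\<Sum>j\<in>UNIV. h j) = (\<Sum>j\<in>-S. (h j::real))"
  by (rule sum.mono_neutral_right) (use assms in auto)

lemma sum_Collect_if: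
  "(\<Sum>S | P S. f S) = (\<Sum>S\<in>(UNIV::'a::finite set). if P S then f S else (0::real))"
  by (simp add: sum.If_cases)

context
  fixes \<pi> :: "'a::finite set \<Rightarrow> real" and r :: nat
  assumes dist: "is_distribution \<pi>" and hom: "homogeneous r \<pi>"
begin

lemma pi_nonneg: "0 \<le> \<pi> S" using dist unfolding is_distribution_def by auto

lemma pi_card: "\<pi> S \<noteq> 0 \<Longrightarrow> card S = r" using hom unfolding homogeneous_def by auto

lemma wt_dval: "wt \<pi> r I = fact (r - card I) * dval \<pi> I"
proof -
  have "(\<Sum>B | B \<in> support \<pi> \<and> I \<subseteq> B. \<pi> B) = (\<Sum>S | I \<subseteq> S. \<pi> S)"
    by (rule sum.mono_neutral_left) (auto simp: support_def)
  then show ?thesis unfolding wt_def dval_def by simp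
qed

lemma dval_nonneg: "0 \<le> dval \<pi> I"
  unfolding dval_def by (rule sum_nonneg) (rule pi_nonneg)

lemma dval_big: "r < card I \<Longrightarrow> dval \<pi> I = 0"
  unfolding dval_def
proof (rule sum.neutral, rule ballI)
  fix S assume "r < card I" "S \<in> {S. I \<subseteq> S}"
  then have "r < card S" using card_mono[of S I] by simp
  then show "\<pi> S = 0" using pi_card by fastforce
qed

lemma dval_sum:
  assumes "card J < r"
  shows "(\<Sum>x\<in>-J. dval \<pi> (insert x J)) = real (r - card J) * dval \<pi> J"
proof -
  have "(\<Sum>x\<in>-J. dval \<pi> (insert x J))
      = (\<Sum>x\<in>-J. \<Sum>S\<in>UNIV. if insert x J \<subseteq> S then \<pi> S else 0)"
    unfolding dval_def by (simp only: sum_Collect_if)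
  also have "\<dots> = (\<Sum>S\<in>UNIV. \<Sum>x\<in>-J. if insert x J \<subseteq> S then \<pi> S else 0)"
    by (rule sum.swap)
  also have "\<dots> = (\<Sum>S\<in>UNIV. if J \<subseteq> S then real (r - card J) * \<pi> S else 0)"
  proof (rule sum.cong[OF refl])
    fix S :: "'a set"
    show "(\<Sum>x\<in>-J. if insert x J \<subseteq> S then \<pi> S else 0) = (if J \<subseteq> S then real (r - card J) * \<pi> S else 0)"
    proof (cases "J \<subseteq> S")
      case True
      have "(\<Sum>x\<in>-J. if insert x J \<subseteq> S then \<pi> S else 0) = (\<Sum>x\<in>-J. if x \<in> S then \<pi> S else 0)"
        using True by (intro sum.cong refl) auto
      also have "\<dots> = real (card (S - J)) * \<pi> S"
      proof -
        have "(\<Sum>x\<in>-J. if x \<in> S then \<pi> S else 0) = (\<Sum>x\<in>S - J. \<pi> S)"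
          by (rule sum.mono_neutral_cong_right) auto
        then show ?thesis by simp
      qed
      also have "\<dots> = real (r - card J) * \<pi> S"
      proof (cases "\<pi> S = 0")
        case False
        then have "card S = r" by (rule pi_card)
        then have "card (S - J) = r - card J" using True by (simp add: card_Diff_subset)
        then show ?thesis by simp
      qed simp
      finally show ?thesis using True by simp
    next
      case False
      then have "\<forall>x. \<not> insert x J \<subseteq> S" by auto
      then show ?thesis using False by simp
    qed
  qed
  also have "\<dots> = real (r - card J) * dval \<pi> J"
    unfolding dval_def sum_Collect_if[where P="\<lambda>S. J \<subseteq> S" and f=\<pi>] sum_distrib_left
    by (intro sum.cong refl) simp
  finally show ?thesis .
qed

lemma wt_sum:
  assumes "card J < r"
  shows "(\<Sum>x\<in>-J. wt \<pi> r (insert x J)) = wt \<pi> r J"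
proof -
  have "(\<Sum>x\<in>-J. wt \<pi> r (insert x J)) = (\<Sum>x\<in>-J. fact (r - card J - 1) * dval \<pi> (insert x J))"
    by (intro sum.cong refl) (simp add: wt_dval)
  also have "\<dots> = fact (r - card J - 1) * (real (r - card J) * dval \<pi> J)"
    using dval_sum[OF assms] by (simp add: sum_distrib_left[symmetric])
  also have "\<dots> = fact (r - card J) * dval \<pi> J"
  proof -
    have "r - card J = Suc (r - card J - 1)" using assms by simp
    then have "(fact (r - card J) :: real) = real (r - card J) * fact (r - card J - 1)"
      by (metis fact_Suc of_nat_fact)
    then show ?thesis by simp
  qed
  finally show ?thesis by (simp add: wt_dval)
qed

lemma wt_neg:
  assumes slc: "strongly_log_concave \<pi>" and T: "card T + 2 \<le> r" and pos: "0 < wt \<pi> r T"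
    and s0: "(\<Sum>x\<in>-T. wt \<pi> r (insert x T) * y x) = 0"
  shows "(\<Sum>x\<in>-T. \<Sum>z\<in>-insert x T. wt \<pi> r (insert z (insert x T)) * y x * y z) \<le> 0"
proof -
  define D where "D = dval \<pi> T"
  have Dpos: "0 < D" using pos unfolding D_def wt_dval
    by (metis dval_nonneg fact_gt_zero less_eq_real_def mult_zero_right not_less)
  define v where "v i = (if i \<in> T then 0 else y i)" for i
  define H where "H i j = dhess \<pi> T i j" for i j
  define G where "G i = dgrad \<pi> T i" for i
  have slcT: "(\<Sum>i\<in>UNIV. \<Sum>j\<in>UNIV. v i * v j * (H i j / D - G i * G j / D^2)) \<le> 0"
    using slc unfolding strongly_log_concave_def H_def G_def D_def by blast
  have split: "(\<Sum>i\<in>UNIV. \<Sum>j\<in>UNIV. v i * v j * (H i j / D - G i * G j / D^2))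
      = (\<Sum>i\<in>UNIV. \<Sum>j\<in>UNIV. v i * v j * H i j) / D - (\<Sum>i\<in>UNIV. v i * G i) * (\<Sum>j\<in>UNIV. v j * G j) / D^2"
  proof -
    have "(\<Sum>i\<in>UNIV. \<Sum>j\<in>UNIV. v i * v j * (H i j / D - G i * G j / D^2))
        = (\<Sum>i\<in>UNIV. \<Sum>j\<in>UNIV. v i * v j * H i j / D - (v i * G i) * (v j * G j) / D^2)"
      by (intro sum.cong refl) (simp add: algebra_simps)
    also have "\<dots> = (\<Sum>i\<in>UNIV. \<Sum>j\<in>UNIV. v i * v j * H i j) / D - (\<Sum>i\<in>UNIV. v i * G i) * (\<Sum>j\<in>UNIV. v j * G j) / D^2"
      by (simp add: sum_subtractf sum_divide_distrib sum_product)
    finally show ?thesis .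
  qed
  have cT: "card (insert x T) = card T + 1" if "x \<notin> T" for x using that by simp
  have G0: "(\<Sum>i\<in>UNIV. v i * G i) = 0"
  proof -
    have "(\<Sum>i\<in>UNIV. v i * G i) = (\<Sum>i\<in>-T. y i * dval \<pi> (insert i T))"
      by (subst sum_restr_UNIV[where S=T]) (auto simp: v_def G_def dgrad_def intro!: sum.cong)
    also have "\<dots> = (\<Sum>i\<in>-T. wt \<pi> r (insert i T) * y i) / fact (r - card T - 1)"
      by (simp add: sum_divide_distrib wt_dval cT ac_simps)
    also have "\<dots> = 0" using s0 by simp
    finally show ?thesis .
  qed
  have HH: "(\<Sum>i\<in>UNIV. \<Sum>j\<in>UNIV. v i * v j * H i j) \<le> 0"
    using slcT Dpos unfolding split G0 by (simp add: divide_le_0_iff)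
  have HH2: "(\<Sum>i\<in>UNIV. \<Sum>j\<in>UNIV. v i * v j * H i j)
      = (\<Sum>x\<in>-T. \<Sum>z\<in>-insert x T. y x * y z * dval \<pi> (insert z (insert x T)))"
  proof -
    have "(\<Sum>i\<in>UNIV. \<Sum>j\<in>UNIV. v i * v j * H i j) = (\<Sum>i\<in>-T. \<Sum>j\<in>UNIV. v i * v j * H i j)"
      by (rule sum_restr_UNIV) (simp add: v_def)
    also have "\<dots> = (\<Sum>x\<in>-T. \<Sum>z\<in>-insert x T. y x * y z * dval \<pi> (insert z (insert x T)))"
    proof (rule sum.cong[OF refl])
      fix x assume x: "x \<in> -T"
      have "(\<Sum>j\<in>UNIV. v x * v j * H x j) = (\<Sum>j\<in>-insert x T. v x * v j * H x j)"
        by (rule sum_restr_UNIV) (simp add: v_def H_def dhess_def)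
      also have "\<dots> = (\<Sum>z\<in>-insert x T. y x * y z * dval \<pi> (insert z (insert x T)))"
        using x by (intro sum.cong refl) (auto simp: v_def H_def dhess_def insert_commute)
      finally show "(\<Sum>j\<in>UNIV. v x * v j * H x j) = (\<Sum>z\<in>-insert x T. y x * y z * dval \<pi> (insert z (insert x T)))" .
    qed
    finally show ?thesis .
  qed
  have cT2: "card (insert z (insert x T)) = card T + 2" if "x \<notin> T" "z \<notin> insert x T" for x z
    using that by simp
  have "(\<Sum>x\<in>-T. \<Sum>z\<in>-insert x T. wt \<pi> r (insert z (insert x T)) * y x * y z)
      = fact (r - card T - 2) * (\<Sum>x\<in>-T. \<Sum>z\<in>-insert x T. y x * y z * dval \<pi> (insert z (insert x T)))"
    unfolding sum_distrib_left
    by (intro sum.cong refl) (auto simp: wt_dval cT2 algebra_simps)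
  also have "\<dots> \<le> 0" using HH HH2 by (simp add: mult_nonneg_nonpos)
  finally show ?thesis .
qed

end

theorem lemma4p3:
  fixes \<pi> :: "'a::finite set \<Rightarrow> real" and r k :: nat and f :: "'a set \<Rightarrow> real"
  assumes "is_distribution \<pi>"
    and "homogeneous r \<pi>"
    and "strongly_log_concave \<pi>"
    and "matroid_bases (support \<pi>)"
    and "2 \<le> k" and "k \<le> r"
    and "\<forall>I\<in>Mk \<pi> k. f I \<ge> 0"
  shows "Ent (pik \<pi> r k) (Mk \<pi> k) f
         \<ge> real k / (real k - 1) * Ent (pik \<pi> r (k - 1)) (Mk \<pi> (k - 1)) (up_op \<pi> r k f)"
proof -
  note dh = assms(1,2)
  interpret L: wsys "wt \<pi> r" r
  proof
    fix I show "0 \<le> wt \<pi> r I"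
      by (simp add: wt_dval[OF dh] dval_nonneg[OF dh])
  next
    fix I :: "'a set" assume "r < card I"
    then show "wt \<pi> r I = 0" by (simp add: wt_dval[OF dh] dval_big[OF dh])
  next
    fix J :: "'a set" assume "card J < r"
    then show "(\<Sum>x\<in>-J. wt \<pi> r (insert x J)) = wt \<pi> r J" by (rule wt_sum[OF dh])
  next
    fix T :: "'a set" and y :: "'a \<Rightarrow> real"
    assume "card T + 2 \<le> r" "0 < wt \<pi> r T" "(\<Sum>x\<in>-T. wt \<pi> r (insert x T) * y x) = 0"
    then show "(\<Sum>x\<in>-T. \<Sum>z\<in>-insert x T. wt \<pi> r (insert z (insert x T)) * y x * y z) \<le> 0"
      by (rule wt_neg[OF dh assms(3)])
  qed
  have wt_indep: "wt \<pi> r I = 0" if "\<not> indep \<pi> I" for I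
  proof -
    have e: "{B. B \<in> support \<pi> \<and> I \<subseteq> B} = {}" using that unfolding indep_def by auto
    show ?thesis unfolding wt_def e by simp
  qed
  have Afe: "L.Af {} m = {I. card I = m}" for m unfolding L.Af_def by simp
  have Mk_sum: "(\<Sum>I\<in>Mk \<pi> m. wt \<pi> r I * h I) = L.Sw {} m h" for m h
    unfolding L.Sw_def Afe Mk_def
  proof (rule sum.mono_neutral_left)
    show "\<forall>i\<in>{I. card I = m} - {I. indep \<pi> I \<and> card I = m}. wt \<pi> r i * h i = 0"
      using wt_indep by auto
  qed auto
  have dv0: "dval \<pi> {} = 1"
  proof -
    have e: "{S. {} \<subseteq> S} = (UNIV :: 'a set set)" by auto
    show ?thesis using assms(1) unfolding dval_def e is_distribution_def by simp
  qed
  have wt0: "wt \<pi> r {} = fact r" using wt_dval[OF dh, of "{}"] dv0 by simp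
  have Z: "L.Sw {} m (\<lambda>_. 1) = fact r / fact m" if "m \<le> r" for m
    using L.Sw_one[where T="{}" and m=m] that wt0 by simp
  have Zs: "(\<Sum>I'\<in>Mk \<pi> m. wt \<pi> r I') = fact r / fact m" if "m \<le> r" for m
    using Mk_sum[where m=m and h="\<lambda>_. 1"] Z[OF that] by simp
  have pik_sum: "(\<Sum>I\<in>Mk \<pi> m. pik \<pi> r m I * \<phi> I) = L.Sw {} m \<phi> / (fact r / fact m)"
    if "m \<le> r" for m \<phi>
  proof -
    have "(\<Sum>I\<in>Mk \<pi> m. pik \<pi> r m I * \<phi> I) = (\<Sum>I\<in>Mk \<pi> m. wt \<pi> r I * \<phi> I / (fact r / fact m))"
      unfolding pik_def Zs[OF that] by (intro sum.cong refl) simp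
    also have "\<dots> = L.Sw {} m \<phi> / (fact r / fact m)"
      unfolding sum_divide_distrib[symmetric] Mk_sum ..
    finally show ?thesis .
  qed
  have Ent_eq: "Ent (pik \<pi> r m) (Mk \<pi> m) h = L.Ew {} m h / (fact r / fact m)" if "m \<le> r" for m h
    unfolding Ent_def L.Ew_def pik_sum[OF that] Z[OF that] by (simp add: left_diff_distrib right_diff_distrib diff_divide_distrib ac_simps)
  have Nw_eq: "L.Nw {} m h = fact r * Ent (pik \<pi> r m) (Mk \<pi> m) h" if "m \<le> r" for m h
    unfolding L.Nw_def Ent_eq[OF that] by simp
  have upeq: "up_op \<pi> r k f J = L.Up f J" if J: "J \<in> Mk \<pi> (k-1)" for J
  proof -
    have cJ: "card J = k - 1" using J unfolding Mk_def by simp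
    have "L.Up f J = (\<Sum>I\<in>L.Af J 1. wt \<pi> r I / wt \<pi> r J * f I)"
      unfolding L.Up_def using L.A1_sum[where T=J and \<phi>="\<lambda>I. wt \<pi> r I / wt \<pi> r J * f I"] by simp
    also have "\<dots> = (\<Sum>I | I \<in> Mk \<pi> k \<and> J \<subset> I. wt \<pi> r I / wt \<pi> r J * f I)"
    proof (rule sum.mono_neutral_right)
      show "finite (L.Af J 1)" by simp
      show "{I. I \<in> Mk \<pi> k \<and> J \<subset> I} \<subseteq> L.Af J 1"
        using cJ assms(5) unfolding Mk_def L.Af_def by auto
      show "\<forall>I\<in>L.Af J 1 - {I. I \<in> Mk \<pi> k \<and> J \<subset> I}. wt \<pi> r I / wt \<pi> r J * f I = 0"
      proof
        fix I assume I: "I \<in> L.Af J 1 - {I. I \<in> Mk \<pi> k \<and> J \<subset> I}"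
        then have "J \<subseteq> I" "card I = k" using cJ assms(5) unfolding L.Af_def by auto
        moreover have "J \<noteq> I" using I unfolding L.Af_def by auto
        ultimately have "\<not> indep \<pi> I" using I unfolding Mk_def by auto
        then show "wt \<pi> r I / wt \<pi> r J * f I = 0" using wt_indep by simp
      qed
    qed
    finally show ?thesis unfolding up_op_def by simp
  qed
  have Ent_up: "Ent (pik \<pi> r (k-1)) (Mk \<pi> (k-1)) (up_op \<pi> r k f) = Ent (pik \<pi> r (k-1)) (Mk \<pi> (k-1)) (L.Up f)"
    unfolding Ent_def using upeq by simp
  have nn: "L.nonneg_on {} k f"
    unfolding L.nonneg_on_def
  proof (intro ballI impI)
    fix I assume I: "I \<in> L.Af {} k" "0 < wt \<pi> r I"
    then have "indep \<pi> I" using wt_indep by force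
    then have "I \<in> Mk \<pi> k" using I(1) unfolding Mk_def Afe by simp
    then show "0 \<le> f I" using assms(7) by simp
  qed
  have main: "real k * L.Nw {} (k-1) (L.Up f) \<le> (real k - 1) * L.Nw {} k f"
    using L.mainC[of k "{}" f] assms(5,6) nn by simp
  define E1 where "E1 = Ent (pik \<pi> r k) (Mk \<pi> k) f"
  define E0 where "E0 = Ent (pik \<pi> r (k-1)) (Mk \<pi> (k-1)) (L.Up f)"
  have "real k * (fact r * E0) \<le> (real k - 1) * (fact r * E1)"
    using main Nw_eq[where m="k-1" and h="L.Up f"] Nw_eq[where m=k and h=f] assms(6) unfolding E0_def E1_def by simp
  then have "fact r * (real k * E0) \<le> fact r * ((real k - 1) * E1)" by (simp add: algebra_simps)
  then have "real k * E0 \<le> (real k - 1) * E1" by (simp add: mult_le_cancel_left_pos)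
  moreover have "0 < real k - 1" using assms(5) by simp
  ultimately have "real k / (real k - 1) * E0 \<le> E1" by (simp add: field_simps)
  then show ?thesis unfolding Ent_up E0_def E1_def .
qed

end
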